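(* For all positive integers $n$ and $k$ with $k\geq 2$, and every function $\sigma\colon E(K_{4n})\to\{-1,1\}$ with $\left|\sigma\left(E(K_{4n})\right)\right|< n(n-1)+k(6n-1)+k^2$, there is a perfect matching $M$ in $K_{4n}$ with $|\sigma(M)|\leq 2k-2$.
   Context: $K_{4n}$ denotes the complete graph on $4n$ vertices and $E(K_{4n})$ its edge set. For a set $F$ of edges, $\sigma(F)=\sum_{e\in F}\sigma(e)$. *)

theory Defs
  imports Main
begin

definition complete_edges :: "nat \<Rightarrow> nat set set" where
  "complete_edges m = {e. e \<subseteq> {0..<m} \<and> card e = 2}"

definition perfect_matching :: "nat \<Rightarrow> nat set set \<Rightarrow> bool" where
  "perfect_matching m M \<longleftrightarrow>
     M \<subseteq> complete_edges m \<and>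
     (\<forall>e\<in>M. \<forall>f\<in>M. e \<noteq> f \<longrightarrow> e \<inter> f = {}) \<and>
     (\<forall>v\<in>{0..<m}. \<exists>e\<in>M. v \<in> e)"

end

theory Submission imports Defs begin

definition A :: "(nat set \<Rightarrow> int) \<Rightarrow> nat \<Rightarrow> nat \<Rightarrow> bool" where
  "A \<sigma> x y \<longleftrightarrow> x \<noteq> y \<and> \<sigma> {x,y} = -1"

lemma A_sym: "A \<sigma> x y = A \<sigma> y x"
  unfolding A_def by (auto simp: insert_commute)

lemma A_irrefl[simp]: "\<not> A \<sigma> x x"
  unfolding A_def by simp

definition FI :: "nat \<Rightarrow> (nat \<Rightarrow> nat) \<Rightarrow> bool" where
  "FI N p \<longleftrightarrow> (\<forall>x<N. p x < N \<and> p x \<noteq> x \<and> p (p x) = x)"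

definition score :: "(nat set \<Rightarrow> int) \<Rightarrow> nat \<Rightarrow> (nat \<Rightarrow> nat) \<Rightarrow> nat" where
  "score \<sigma> N p = (\<Sum>x<N. if A \<sigma> x (p x) then 1 else 0)"

definition Opt :: "(nat set \<Rightarrow> int) \<Rightarrow> nat \<Rightarrow> (nat \<Rightarrow> nat) \<Rightarrow> bool" where
  "Opt \<sigma> N p \<longleftrightarrow> (\<forall>q. FI N q \<longrightarrow> score \<sigma> N q \<le> score \<sigma> N p + 4 \<longrightarrow> score \<sigma> N q \<le> score \<sigma> N p)"

definition swp :: "(nat \<Rightarrow> nat) \<Rightarrow> nat \<Rightarrow> nat \<Rightarrow> nat \<Rightarrow> nat" where
  "swp p a b = (\<lambda>x. if x = a then b else if x = b then a else if x = p a then p b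
      else if x = p b then p a else p x)"

lemma FI_D: "FI N p \<Longrightarrow> x < N \<Longrightarrow> p x < N \<and> p x \<noteq> x \<and> p (p x) = x"
  unfolding FI_def by blast

lemma swp_FI:
  assumes "FI N p" "a < N" "b < N" "a \<noteq> b" "b \<noteq> p a"
  shows "FI N (swp p a b)"
proof -
  have pa: "p a < N" "p a \<noteq> a" "p (p a) = a" using FI_D[OF assms(1,2)] by auto
  have pb: "p b < N" "p b \<noteq> b" "p (p b) = b" using FI_D[OF assms(1,3)] by auto
  have d1: "a \<noteq> p b" using assms(5) pb(3) by metis
  have d2: "p a \<noteq> p b" using assms(4) pa(3) pb(3) by metis
  have pinj: "\<And>x y. x<N \<Longrightarrow> y<N \<Longrightarrow> p x = p y \<Longrightarrow> x = y"
    using assms(1) unfolding FI_def by metis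
  show ?thesis unfolding FI_def
  proof (intro allI impI)
    fix x assume x: "x < N"
    have px: "p x < N" "p x \<noteq> x" "p (p x) = x" using FI_D[OF assms(1) x] by auto
    consider "x = a" | "x = b" | "x = p a" | "x = p b" | "x \<notin> {a,b,p a,p b}" by blast
    then show "swp p a b x < N \<and> swp p a b x \<noteq> x \<and> swp p a b (swp p a b x) = x"
    proof cases
      case 1 then show ?thesis using pa pb d1 d2 assms by (simp add: swp_def)
    next
      case 2 then show ?thesis using pa pb d1 d2 assms by (simp add: swp_def)
    next
      case 3 then show ?thesis using pa pb d1 d2 assms by (simp add: swp_def)
    next
      case 4 then show ?thesis using pa pb d1 d2 assms by (simp add: swp_def)
    next
      case 5
      have "p x \<notin> {a,b,p a,p b}" using 5 pa pb px by auto
      then show ?thesis using 5 px by (simp add: swp_def)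
    qed
  qed
qed


lemma swp_score:
  assumes "FI N p" "a < N" "b < N" "a \<noteq> b" "b \<noteq> p a"
  shows "score \<sigma> N (swp p a b) + 2*((if A \<sigma> a (p a) then 1 else 0) + (if A \<sigma> b (p b) then 1 else 0))
       = score \<sigma> N p + 2*((if A \<sigma> a b then 1 else 0) + (if A \<sigma> (p a) (p b) then 1 else 0))"
proof -
  have pa: "p a < N" "p a \<noteq> a" "p (p a) = a" using FI_D[OF assms(1,2)] by auto
  have pb: "p b < N" "p b \<noteq> b" "p (p b) = b" using FI_D[OF assms(1,3)] by auto
  have d1: "a \<noteq> p b" using assms(5) pb(3) by metis
  have d2: "p a \<noteq> p b" using assms(4) pa(3) pb(3) by metis
  define F where "F = {a,b,p a,p b}"
  define h where "h = (\<lambda>x y. if A \<sigma> x y then 1 else (0::nat))"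
  have hs: "h x y = h y x" for x y unfolding h_def using A_sym by metis
  have FN: "F \<subseteq> {..<N}" using assms pa pb unfolding F_def by auto
  have sc: "score \<sigma> N q = (\<Sum>x\<in>{..<N} - F. h x (q x)) + (\<Sum>x\<in>F. h x (q x))" for q
    unfolding score_def h_def using sum.subset_diff[OF FN, of "\<lambda>x. if A \<sigma> x (q x) then 1 else (0::nat)"] by simp
  have out: "(\<Sum>x\<in>{..<N} - F. h x (swp p a b x)) = (\<Sum>x\<in>{..<N} - F. h x (p x))"
    by (rule sum.cong) (auto simp: swp_def F_def)
  have in1: "(\<Sum>x\<in>F. h x (swp p a b x)) = 2 * h a b + 2 * h (p a) (p b)"
    unfolding F_def using assms pa pb d1 d2 by (simp add: swp_def hs)
  have in2: "(\<Sum>x\<in>F. h x (p x)) = 2 * h a (p a) + 2 * h b (p b)"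
    unfolding F_def using assms pa pb d1 d2 by (simp add: hs)
  show ?thesis using sc[of "swp p a b"] sc[of p] out in1 in2 unfolding h_def by simp
qed

lemma P1:
  assumes "FI N p" "Opt \<sigma> N p" "u < N" "w < N" "\<not> A \<sigma> u (p u)" "\<not> A \<sigma> w (p w)" "A \<sigma> u w"
  shows False
proof -
  have uw: "u \<noteq> w" using assms(7) by auto
  have wpu: "w \<noteq> p u" using assms(5,7) by auto
  have s: "score \<sigma> N (swp p u w) = score \<sigma> N p + 2*(1 + (if A \<sigma> (p u) (p w) then 1 else 0))"
    using swp_score[OF assms(1,3,4) uw wpu, of \<sigma>] assms(5,6,7) by simp
  have "FI N (swp p u w)" by (rule swp_FI[OF assms(1,3,4) uw wpu])
  with assms(2) s show False unfolding Opt_def by (cases "A \<sigma> (p u) (p w)") force+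
qed

lemma P2:
  assumes "FI N p" "Opt \<sigma> N p" "x < N" "A \<sigma> x (p x)" "u < N" "w < N"
    "\<not> A \<sigma> u (p u)" "\<not> A \<sigma> w (p w)" "u \<noteq> w" "A \<sigma> u x" "A \<sigma> (p x) w"
  shows False
proof -
  have px: "p x < N" "p x \<noteq> x" "p (p x) = x" using FI_D[OF assms(1,3)] by auto
  have pu: "p u < N" "p u \<noteq> u" "p (p u) = u" using FI_D[OF assms(1,5)] by auto
  have ux: "u \<noteq> x" using assms(10) by auto
  have xpu: "x \<noteq> p u" using assms(4,7) pu(3) A_sym by metis
  have q1: "FI N (swp p u x)" by (rule swp_FI[OF assms(1,5,3) ux xpu])
  have s: "score \<sigma> N (swp p u x) + 2 = score \<sigma> N p + 2*(1 + (if A \<sigma> (p u) (p x) then 1 else 0))"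
    using swp_score[OF assms(1,5,3) ux xpu, of \<sigma>] assms(4,7,10) by simp
  show False
  proof (cases "A \<sigma> (p u) (p x)")
    case True
    with s q1 assms(2) show False unfolding Opt_def by force
  next
    case False
    have eq: "score \<sigma> N (swp p u x) = score \<sigma> N p" using s False by simp
    have opt: "Opt \<sigma> N (swp p u x)" using assms(2) eq unfolding Opt_def by simp
    have pxu: "p x \<noteq> u" using assms(7,10) px(3) A_sym by metis
    have pxpu: "p x \<noteq> p u" using ux px(3) pu(3) by metis
    have q1px: "swp p u x (p x) = p u" using pxu px(2) pxpu by (simp add: swp_def)
    have wx: "w \<noteq> x" using assms(4,8) by auto
    have wpx: "w \<noteq> p x" using assms(11) by auto
    have wpu: "w \<noteq> p u" using False assms(11) A_sym by metis
    have q1w: "swp p u x w = p w" using assms(9) wx wpx wpu by (simp add: swp_def)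
    show False
      using P1[OF q1 opt px(1) assms(6)] q1px q1w False assms(8,11) A_sym by metis
  qed
qed


lemma P3:
  assumes "FI N p" "Opt \<sigma> N p" "x < N" "y < N" "A \<sigma> x (p x)" "A \<sigma> y (p y)" "y \<noteq> x" "y \<noteq> p x"
    "u < N" "w < N" "\<not> A \<sigma> u (p u)" "\<not> A \<sigma> w (p w)" "u \<noteq> w" "A \<sigma> u x" "A \<sigma> y w"
    "A \<sigma> (p x) (p y)"
  shows False
proof -
  have px: "p x < N" "p x \<noteq> x" "p (p x) = x" using FI_D[OF assms(1,3)] by auto
  have py: "p y < N" "p y \<noteq> y" "p (p y) = y" using FI_D[OF assms(1,4)] by auto
  have pu: "p u < N" "p u \<noteq> u" "p (p u) = u" using FI_D[OF assms(1,9)] by auto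
  have ux: "u \<noteq> x" using assms(14) by auto
  have xpu: "x \<noteq> p u" using assms(5,11) pu(3) A_sym by metis
  have q1: "FI N (swp p u x)" by (rule swp_FI[OF assms(1,9,3) ux xpu])
  have s: "score \<sigma> N (swp p u x) + 2 = score \<sigma> N p + 2*(1 + (if A \<sigma> (p u) (p x) then 1 else 0))"
    using swp_score[OF assms(1,9,3) ux xpu, of \<sigma>] assms(5,11,14) by simp
  show False
  proof (cases "A \<sigma> (p u) (p x)")
    case True
    with s q1 assms(2) show False unfolding Opt_def by force
  next
    case False
    have eq: "score \<sigma> N (swp p u x) = score \<sigma> N p" using s False by simp
    have opt: "Opt \<sigma> N (swp p u x)" using assms(2) eq unfolding Opt_def by simp
    have pxu: "p x \<noteq> u" using assms(11,14) px(3) A_sym by metis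
    have pxpu: "p x \<noteq> p u" using ux px(3) pu(3) by metis
    have q1px: "swp p u x (p x) = p u" using pxu px(2) pxpu by (simp add: swp_def)
    have yu: "y \<noteq> u" using assms(6,11) by auto
    have ypu: "y \<noteq> p u" using assms(6,11) pu(3) A_sym by metis
    have pyu: "p y \<noteq> u" using assms(6,11) py(3) A_sym by metis
    have pyx: "p y \<noteq> x" using assms(8) py(3) by metis
    have pypu: "p y \<noteq> p u" using yu py(3) pu(3) by metis
    have pypx: "p y \<noteq> p x" using assms(7) py(3) px(3) by metis
    have q1py: "swp p u x (p y) = y" using pyu pyx pypu pypx py(3) by (simp add: swp_def)
    have wx: "w \<noteq> x" using assms(5,12) by auto
    have wpx: "w \<noteq> p x" using assms(5,12) px(3) A_sym by metis
    have q1w: "\<not> A \<sigma> w (swp p u x w)"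
    proof (cases "w = p u")
      case True
      then have "swp p u x w = p x" using xpu pu(2) by (simp add: swp_def)
      then show ?thesis using True False by simp
    next
      case False
      then have "swp p u x w = p w" using assms(13) wx wpx by (simp add: swp_def)
      then show ?thesis using assms(12) by simp
    qed
    have "A \<sigma> (p y) (swp p u x (p y))" using q1py assms(6) A_sym by metis
    moreover have "\<not> A \<sigma> (p x) (swp p u x (p x))" using q1px False A_sym by metis
    moreover have "p x \<noteq> w" using wpx by auto
    ultimately show False
      using P2[OF q1 opt py(1) _ px(1) assms(10) _ q1w _ assms(16)] q1py assms(15) by simp
  qed
qed


definition Wset :: "(nat set \<Rightarrow> int) \<Rightarrow> nat \<Rightarrow> (nat \<Rightarrow> nat) \<Rightarrow> nat set" where
  "Wset \<sigma> N p = {x. x < N \<and> A \<sigma> x (p x)}"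
definition Uset :: "(nat set \<Rightarrow> int) \<Rightarrow> nat \<Rightarrow> (nat \<Rightarrow> nat) \<Rightarrow> nat set" where
  "Uset \<sigma> N p = {x. x < N \<and> \<not> A \<sigma> x (p x)}"
definition cc :: "(nat set \<Rightarrow> int) \<Rightarrow> nat \<Rightarrow> (nat \<Rightarrow> nat) \<Rightarrow> nat \<Rightarrow> int" where
  "cc \<sigma> N p x = (\<Sum>y\<in>Uset \<sigma> N p. of_bool (A \<sigma> x y))"
definition poor :: "(nat set \<Rightarrow> int) \<Rightarrow> nat \<Rightarrow> (nat \<Rightarrow> nat) \<Rightarrow> nat \<Rightarrow> bool" where
  "poor \<sigma> N p x \<longleftrightarrow> cc \<sigma> N p x \<le> 1 \<and> cc \<sigma> N p (p x) \<le> 1"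

lemma inv_bij: "(\<And>x. x \<in> S \<Longrightarrow> h x \<in> S \<and> h (h x) = x) \<Longrightarrow> bij_betw h S S"
  by (rule bij_betw_byWitness[where f'=h]) auto

context
  fixes N :: nat and \<sigma> :: "nat set \<Rightarrow> int" and p :: "nat \<Rightarrow> nat"
  assumes FI: "FI N p" and OPT: "Opt \<sigma> N p"
begin

abbreviation "W \<equiv> Wset \<sigma> N p"
abbreviation "U \<equiv> Uset \<sigma> N p"
abbreviation "c \<equiv> cc \<sigma> N p"
abbreviation "aa x y \<equiv> (of_bool (A \<sigma> x y) :: int)"

lemma finW: "finite W" and finU: "finite U"
  unfolding Wset_def Uset_def by auto

lemma WU: "W \<union> U = {..<N}" "W \<inter> U = {}" "U = {..<N} - W"
  unfolding Wset_def Uset_def by auto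

lemma W_p: "x \<in> W \<Longrightarrow> p x \<in> W \<and> p x \<noteq> x \<and> p (p x) = x"
  using FI_D[OF FI, of x] A_sym unfolding Wset_def by auto

lemma U_p: "x \<in> U \<Longrightarrow> p x \<in> U \<and> p x \<noteq> x \<and> p (p x) = x"
  using FI_D[OF FI, of x] A_sym unfolding Uset_def by auto

lemma UU: "x \<in> U \<Longrightarrow> y \<in> U \<Longrightarrow> \<not> A \<sigma> x y"
  using P1[OF FI OPT] unfolding Uset_def by blast

lemma c_card: "c x = int (card {y\<in>U. A \<sigma> x y})"
proof -
  have "c x = int (card (U \<inter> {y. A \<sigma> x y}))" unfolding cc_def using finU by simp
  also have "U \<inter> {y. A \<sigma> x y} = {y\<in>U. A \<sigma> x y}" by auto
  finally show ?thesis .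
qed

lemma c_nonneg: "c x \<ge> 0" using c_card by simp

lemma c_le: "c x \<le> int (card U)"
  unfolding c_card using finU by (simp add: card_mono)

lemma c1: "c x \<ge> 1 \<Longrightarrow> \<exists>y\<in>U. A \<sigma> x y"
  unfolding c_card by (metis (mono_tags, lifting) card.empty empty_Collect_eq of_nat_0 not_one_le_zero)

lemma c2: "c x \<ge> 2 \<Longrightarrow> \<exists>y\<in>U. A \<sigma> x y \<and> y \<noteq> z"
proof (rule ccontr)
  assume a: "c x \<ge> 2" "\<not> (\<exists>y\<in>U. A \<sigma> x y \<and> y \<noteq> z)"
  then have "{y\<in>U. A \<sigma> x y} \<subseteq> {z}" by auto
  then have "card {y\<in>U. A \<sigma> x y} \<le> 1" using card_mono[of "{z}"] by fastforce
  with a(1) show False unfolding c_card by simp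
qed

lemma F3: "x \<in> W \<Longrightarrow> c x \<ge> 2 \<Longrightarrow> c (p x) = 0"
proof (rule ccontr)
  assume x: "x \<in> W" "c x \<ge> 2" "c (p x) \<noteq> 0"
  then have "c (p x) \<ge> 1" using c_nonneg[of "p x"] by linarith
  then obtain w where w: "w \<in> U" "A \<sigma> (p x) w" using c1 by blast
  obtain u where u: "u \<in> U" "A \<sigma> x u" "u \<noteq> w" using c2[OF x(2)] by blast
  show False
    using P2[OF FI OPT, of x u w] x(1) u w A_sym[of \<sigma> x u] unfolding Wset_def Uset_def by auto
qed

lemma F4: "x \<in> W \<Longrightarrow> y \<in> W \<Longrightarrow> y \<noteq> x \<Longrightarrow> y \<noteq> p x \<Longrightarrow> c x \<ge> 2 \<Longrightarrow> c y \<ge> 1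
   \<Longrightarrow> \<not> A \<sigma> (p x) (p y)"
proof
  assume x: "x \<in> W" "y \<in> W" "y \<noteq> x" "y \<noteq> p x" "c x \<ge> 2" "c y \<ge> 1" "A \<sigma> (p x) (p y)"
  obtain w where w: "w \<in> U" "A \<sigma> y w" using c1 x(6) by blast
  obtain u where u: "u \<in> U" "A \<sigma> x u" "u \<noteq> w" using c2[OF x(5)] by blast
  show False
    using P3[OF FI OPT, of x y u w] x u w A_sym[of \<sigma> x u] unfolding Wset_def Uset_def by auto
qed

lemma F5: "x \<in> W \<Longrightarrow> c x + c (p x) \<le> int (card U) - of_bool (poor \<sigma> N p x) * (int (card U) - 2)"
proof -
  assume x: "x \<in> W"
  show ?thesis
  proof (cases "poor \<sigma> N p x")
    case True then show ?thesis unfolding poor_def by simp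
  next
    case False
    then have "c x \<ge> 2 \<or> c (p x) \<ge> 2" unfolding poor_def by auto
    then show ?thesis
    proof
      assume "c x \<ge> 2" then have "c (p x) = 0" using F3 x by blast
      then show ?thesis using False c_le[of x] by simp
    next
      assume "c (p x) \<ge> 2" then have "c (p (p x)) = 0" using F3 W_p x by blast
      then show ?thesis using False c_le[of "p x"] W_p x by simp
    qed
  qed
qed


lemma F6:
  assumes x: "x \<in> W" and y: "y \<in> W" "y \<noteq> x" "y \<noteq> p x"
  shows "aa x y + aa x (p y) + aa (p x) y + aa (p x) (p y)
     \<le> 3 + of_bool (poor \<sigma> N p x) + of_bool (poor \<sigma> N p y)"
proof (cases "poor \<sigma> N p x \<or> poor \<sigma> N p y")
  case True then show ?thesis by auto
next
  case False
  have px: "p x \<in> W" "p x \<noteq> x" "p (p x) = x" using W_p x by auto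
  have py: "p y \<in> W" "p y \<noteq> y" "p (p y) = y" using W_p y by auto
  have d1: "p y \<noteq> x" using y(3) py(3) by metis
  have d2: "p y \<noteq> p x" using y(2) py(3) px(3) by metis
  from False have cx: "c x \<ge> 2 \<or> c (p x) \<ge> 2" and cy: "c y \<ge> 2 \<or> c (p y) \<ge> 2"
    unfolding poor_def by auto
  have "\<not> A \<sigma> (p x) (p y) \<or> \<not> A \<sigma> (p x) y \<or> \<not> A \<sigma> x (p y) \<or> \<not> A \<sigma> x y"
  proof -
    { assume a: "c x \<ge> 2" "c y \<ge> 2"
      have "\<not> A \<sigma> (p x) (p y)" using F4[OF x y a(1)] a(2) by simp }
    moreover
    { assume a: "c x \<ge> 2" "c (p y) \<ge> 2"
      have "\<not> A \<sigma> (p x) (p (p y))" using F4[OF x py(1) d1 d2 a(1)] a(2) by simp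
      then have "\<not> A \<sigma> (p x) y" using py(3) by simp }
    moreover
    { assume a: "c (p x) \<ge> 2" "c y \<ge> 2"
      have "\<not> A \<sigma> (p (p x)) (p y)" using F4[OF px(1) y(1) y(3) _ a(1)] a(2) px(3) y(2) by simp
      then have "\<not> A \<sigma> x (p y)" using px(3) by simp }
    moreover
    { assume a: "c (p x) \<ge> 2" "c (p y) \<ge> 2"
      have "\<not> A \<sigma> (p (p x)) (p (p y))" using F4[OF px(1) py(1) d2 _ a(1)] a(2) px(3) d1 by simp
      then have "\<not> A \<sigma> x y" using px(3) py(3) by simp }
    ultimately show ?thesis using cx cy by blast
  qed
  then show ?thesis by auto
qed


lemma cardWU: "card W + card U = N"
proof -
  have "card (W \<union> U) = card W + card U" using card_Un_disjoint[OF finW finU] WU(2) by simp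
  then show ?thesis using WU(1) by simp
qed

lemma split_sum: "(\<Sum>y<N. f y) = (\<Sum>y\<in>W. f y) + (\<Sum>y\<in>U. f y)"
  using sum.union_disjoint[OF finW finU WU(2), of f] WU(1) by simp

lemma count_bound:
  assumes hyp: "2 * int (card W) + 6 \<le> 4 * int (card U)"
  shows "4 * (\<Sum>x<N. \<Sum>y<N. aa x y)
     \<le> 4 * int (card W) * int N - 2 * int (card W) - int (card W)^2"
proof -
  define w where "w = int (card W)"
  define u where "u = int (card U)"
  define R where "R = (\<lambda>x. W - {x, p x})"
  define pb where "pb = (\<lambda>x. of_bool (poor \<sigma> N p x) :: int)"
  define P where "P = (\<Sum>x\<in>W. pb x)"
  define C where "C = (\<Sum>x\<in>W. c x)"
  define T where "T = (\<Sum>x\<in>W. \<Sum>y\<in>R x. aa x y)"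
  have finR: "finite (R x)" for x unfolding R_def using finW by simp
  have Rsub: "R x \<subseteq> W" for x unfolding R_def by auto
  have D1: "(\<Sum>x<N. \<Sum>y<N. aa x y) = (\<Sum>x\<in>W. \<Sum>y\<in>W. aa x y) + 2 * C"
  proof -
    have "(\<Sum>x<N. \<Sum>y<N. aa x y) = (\<Sum>x<N. (\<Sum>y\<in>W. aa x y) + c x)"
      by (rule sum.cong[OF refl], unfold cc_def, rule split_sum)
    also have "\<dots> = (\<Sum>x\<in>W. (\<Sum>y\<in>W. aa x y) + c x) + (\<Sum>x\<in>U. (\<Sum>y\<in>W. aa x y) + c x)"
      by (rule split_sum)
    also have "(\<Sum>x\<in>U. (\<Sum>y\<in>W. aa x y) + c x) = (\<Sum>x\<in>U. (\<Sum>y\<in>W. aa x y))"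
      by (rule sum.cong) (auto simp: cc_def UU)
    also have "\<dots> = (\<Sum>y\<in>W. \<Sum>x\<in>U. aa x y)" by (rule sum.swap)
    also have "\<dots> = C" unfolding C_def cc_def by (rule sum.cong) (auto simp: A_sym)
    finally show ?thesis unfolding C_def by (simp add: sum.distrib)
  qed
  have D2: "(\<Sum>y\<in>W. aa x y) = 1 + (\<Sum>y\<in>R x. aa x y)" if x: "x \<in> W" for x
  proof -
    have sub: "{x, p x} \<subseteq> W" using x W_p by auto
    have "(\<Sum>y\<in>W. aa x y) = (\<Sum>y\<in>R x. aa x y) + (\<Sum>y\<in>{x, p x}. aa x y)"
      unfolding R_def by (rule sum.subset_diff[OF sub finW])
    moreover have "(\<Sum>y\<in>{x, p x}. aa x y) = 1" using W_p[OF x] x unfolding Wset_def by simp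
    ultimately show ?thesis by simp
  qed
  have WW: "(\<Sum>x\<in>W. \<Sum>y\<in>W. aa x y) = w + T"
    using D2 unfolding T_def w_def by (simp add: sum.distrib)
  have Rp: "R (p x) = R x" if "x \<in> W" for x using W_p[OF that] unfolding R_def by auto
  have bijR: "bij_betw p (R x) (R x)" if x: "x \<in> W" for x
  proof (rule inv_bij)
    fix y assume y: "y \<in> R x"
    then have yW: "y \<in> W" "y \<noteq> x" "y \<noteq> p x" unfolding R_def by auto
    have px: "p (p x) = x" using W_p[OF x] by simp
    have py: "p y \<in> W" "p (p y) = y" using W_p[OF yW(1)] by simp_all
    have "p y \<noteq> x" using yW(3) py(2) by metis
    moreover have "p y \<noteq> p x" using yW(2) py(2) px by metis
    ultimately show "p y \<in> R x \<and> p (p y) = y" using py unfolding R_def by simp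
  qed
  have bijW: "bij_betw p W W" by (rule inv_bij) (use W_p in simp)
  have T2: "(\<Sum>x\<in>W. \<Sum>y\<in>R x. aa x (p y)) = T"
    unfolding T_def by (rule sum.cong[OF refl]) (rule sum.reindex_bij_betw[OF bijR])
  have T3: "(\<Sum>x\<in>W. \<Sum>y\<in>R x. aa (p x) y) = T"
  proof -
    have "(\<Sum>x\<in>W. \<Sum>y\<in>R x. aa (p x) y) = (\<Sum>x\<in>W. (\<lambda>z. \<Sum>y\<in>R z. aa z y) (p x))"
      by (rule sum.cong[OF refl]) (simp add: Rp)
    also have "\<dots> = T" unfolding T_def by (rule sum.reindex_bij_betw[OF bijW])
    finally show ?thesis .
  qed
  have T4: "(\<Sum>x\<in>W. \<Sum>y\<in>R x. aa (p x) (p y)) = T"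
  proof -
    have "(\<Sum>x\<in>W. \<Sum>y\<in>R x. aa (p x) (p y)) = (\<Sum>x\<in>W. \<Sum>y\<in>R x. aa (p x) y)"
      by (rule sum.cong[OF refl]) (rule sum.reindex_bij_betw[OF bijR])
    then show ?thesis using T3 by simp
  qed
  have G: "(\<Sum>x\<in>W. \<Sum>y\<in>R x. aa x y + aa x (p y) + aa (p x) y + aa (p x) (p y)) = 4 * T"
    using T2 T3 T4 unfolding T_def by (simp add: sum.distrib)
  have cardR: "int (card (R x)) = w - 2" if x: "x \<in> W" for x
  proof -
    have sub: "{x, p x} \<subseteq> W" using x W_p by auto
    have c2: "card {x, p x} = 2" using W_p[OF x] by simp
    have "card W \<ge> 2" using card_mono[OF finW sub] c2 by simp
    then show ?thesis unfolding R_def w_def using card_Diff_subset[OF _ sub] c2 by simp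
  qed
  have Gb: "(\<Sum>y\<in>R x. aa x y + aa x (p y) + aa (p x) y + aa (p x) (p y))
      \<le> (3 + pb x) * (w - 2) + P" if x: "x \<in> W" for x
  proof -
    have "(\<Sum>y\<in>R x. aa x y + aa x (p y) + aa (p x) y + aa (p x) (p y))
        \<le> (\<Sum>y\<in>R x. (3 + pb x) + pb y)"
      by (rule sum_mono) (use F6[OF x] in \<open>auto simp: R_def pb_def\<close>)
    also have "\<dots> = (3 + pb x) * int (card (R x)) + (\<Sum>y\<in>R x. pb y)"
      by (simp add: sum.distrib)
    also have "(\<Sum>y\<in>R x. pb y) \<le> P"
      unfolding P_def by (rule sum_mono2[OF finW Rsub]) (simp add: pb_def)
    finally show ?thesis using cardR[OF x] by simp
  qed
  have T_b: "4 * T \<le> (\<Sum>x\<in>W. (3 + pb x) * (w - 2) + P)"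
    unfolding G[symmetric] by (rule sum_mono) (rule Gb)
  have T_b2: "(\<Sum>x\<in>W. (3 + pb x) * (w - 2) + P) = (3 * w + P) * (w - 2) + w * P"
    unfolding P_def w_def by (simp add: sum.distrib sum_distrib_right[symmetric])
  have C2: "2 * C = (\<Sum>x\<in>W. c x + c (p x))"
  proof -
    have "(\<Sum>x\<in>W. c (p x)) = C" unfolding C_def by (rule sum.reindex_bij_betw[OF bijW])
    then show ?thesis unfolding C_def by (simp add: sum.distrib)
  qed
  have C_b: "2 * C \<le> (\<Sum>x\<in>W. u - pb x * (u - 2))"
    unfolding C2 u_def pb_def by (rule sum_mono) (rule F5)
  have C_b2: "(\<Sum>x\<in>W. u - pb x * (u - 2)) = w * u - P * (u - 2)"
    unfolding P_def w_def by (simp add: sum_subtractf sum_distrib_right[symmetric])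
  have Pnn: "P \<ge> 0" unfolding P_def pb_def by (simp add: sum_nonneg)
  have N: "int N = w + u" using cardWU unfolding w_def u_def by simp
  have hyp': "2 * w + 6 \<le> 4 * u" using hyp unfolding w_def u_def by simp
  have key: "P * (2 * w + 6 - 4 * u) \<le> 0" using Pnn hyp' by (simp add: mult_nonneg_nonpos)
  have "4 * (\<Sum>x<N. \<Sum>y<N. aa x y) = 4 * w + 4 * T + 4 * (2 * C)" using D1 WW by simp
  also have "\<dots> \<le> 4 * w + ((3 * w + P) * (w - 2) + w * P) + 4 * (w * u - P * (u - 2))"
  proof -
    have gen: "\<And>a b X Y::int. a \<le> X \<Longrightarrow> b \<le> Y \<Longrightarrow> 4 * w + a + 4 * b \<le> 4 * w + X + 4 * Y"
      by linarith
    show ?thesis by (rule gen[OF T_b[unfolded T_b2] C_b[unfolded C_b2]])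
  qed
  also have "\<dots> \<le> 4 * w * (w + u) - 2 * w - w^2"
    using key by (simp add: algebra_simps power2_eq_square)
  finally show ?thesis using N unfolding w_def by simp
qed

end


lemma two_to_one:
  fixes g :: "'b \<Rightarrow> int"
  assumes "finite S" "finite T" "f ` S \<subseteq> T" "\<And>t. t \<in> T \<Longrightarrow> card {z\<in>S. f z = t} = 2"
  shows "(\<Sum>z\<in>S. g (f z)) = 2 * (\<Sum>t\<in>T. g t)"
proof -
  have "(\<Sum>z\<in>S. g (f z)) = (\<Sum>t\<in>T. \<Sum>z\<in>{z\<in>S. f z = t}. g (f z))"
    using sum.group[OF assms(1,2,3), of "\<lambda>z. g (f z)"] by simp
  also have "\<dots> = (\<Sum>t\<in>T. 2 * g t)"
  proof (rule sum.cong[OF refl])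
    fix t assume t: "t \<in> T"
    have "(\<Sum>z\<in>{z\<in>S. f z = t}. g (f z)) = (\<Sum>z\<in>{z\<in>S. f z = t}. g t)" by (rule sum.cong) auto
    also have "\<dots> = 2 * g t" using assms(4)[OF t] by simp
    finally show "(\<Sum>z\<in>{z\<in>S. f z = t}. g (f z)) = 2 * g t" .
  qed
  finally show ?thesis by (simp add: sum_distrib_left)
qed

lemma sigmaE:
  assumes pm: "\<forall>e\<in>complete_edges N. \<sigma> e \<in> {-1, 1}"
  shows "2 * (\<Sum>e\<in>complete_edges N. \<sigma> e)
     = int N * (int N - 1) - 2 * (\<Sum>x<N. \<Sum>y<N. of_bool (A \<sigma> x y))"
proof -
  define S where "S = Sigma {..<N} (\<lambda>x. {..<N} - {x})"
  have finE: "finite (complete_edges N)"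
  proof -
    have "complete_edges N \<subseteq> Pow {0..<N}" unfolding complete_edges_def by auto
    then show ?thesis by (rule finite_subset) simp
  qed
  have img: "(\<lambda>(x,y). {x,y}) ` S \<subseteq> complete_edges N"
    unfolding S_def complete_edges_def by auto
  have fib: "card {z\<in>S. (\<lambda>(x,y). {x,y}) z = e} = 2" if e: "e \<in> complete_edges N" for e
  proof -
    obtain a b where ab: "e = {a,b}" "a \<noteq> b" using e unfolding complete_edges_def by (auto simp: card_2_iff)
    have "a < N" "b < N" using e ab unfolding complete_edges_def by auto
    then have "{z\<in>S. (\<lambda>(x,y). {x,y}) z = e} = {(a,b),(b,a)}"
      unfolding S_def ab using ab(2) by (auto simp: doubleton_eq_iff)
    then show ?thesis using ab(2) by simp
  qed
  have "(\<Sum>z\<in>S. \<sigma> ((\<lambda>(x,y). {x,y}) z)) = 2 * (\<Sum>e\<in>complete_edges N. \<sigma> e)"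
    by (rule two_to_one[OF _ finE img fib]) (simp_all add: S_def)
  moreover have "(\<Sum>z\<in>S. \<sigma> ((\<lambda>(x,y). {x,y}) z)) = (\<Sum>x<N. \<Sum>y\<in>{..<N} - {x}. \<sigma> {x,y})"
    unfolding S_def by (simp add: sum.Sigma split_def)
  moreover have "(\<Sum>y\<in>{..<N} - {x}. \<sigma> {x,y}) = (int N - 1) - 2 * (\<Sum>y<N. of_bool (A \<sigma> x y))"
    if x: "x < N" for x
  proof -
    have "(\<Sum>y\<in>{..<N} - {x}. \<sigma> {x,y}) = (\<Sum>y\<in>{..<N} - {x}. 1 - 2 * of_bool (A \<sigma> x y))"
    proof (rule sum.cong[OF refl])
      fix y assume y: "y \<in> {..<N} - {x}"
      then have "{x,y} \<in> complete_edges N" using x unfolding complete_edges_def by auto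
      then have "\<sigma> {x,y} \<in> {-1,1}" using pm by auto
      then show "\<sigma> {x,y} = 1 - 2 * of_bool (A \<sigma> x y)" using y unfolding A_def by auto
    qed
    also have "\<dots> = int (card ({..<N} - {x})) - 2 * (\<Sum>y\<in>{..<N} - {x}. of_bool (A \<sigma> x y))"
      by (simp add: sum_subtractf sum_distrib_left del: sum_of_bool_eq)
    also have "(\<Sum>y\<in>{..<N} - {x}. of_bool (A \<sigma> x y) :: int) = (\<Sum>y<N. of_bool (A \<sigma> x y))"
      by (rule sum.mono_neutral_left) auto
    finally show ?thesis using x by simp
  qed
  ultimately show ?thesis
    by (simp add: sum_subtractf sum_distrib_left del: sum_of_bool_eq)
qed


definition Mof :: "nat \<Rightarrow> (nat \<Rightarrow> nat) \<Rightarrow> nat set set" where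
  "Mof N p = (\<lambda>x. {x, p x}) ` {..<N}"

lemma Mof_pm: "FI N p \<Longrightarrow> perfect_matching N (Mof N p)"
  unfolding perfect_matching_def
proof (intro conjI)
  assume FI: "FI N p"
  show "Mof N p \<subseteq> complete_edges N"
    unfolding Mof_def complete_edges_def using FI_D[OF FI] by (auto simp: card_insert_if) metis
  show "\<forall>e\<in>Mof N p. \<forall>f\<in>Mof N p. e \<noteq> f \<longrightarrow> e \<inter> f = {}"
  proof (intro ballI impI)
    fix e f assume e: "e \<in> Mof N p" and f: "f \<in> Mof N p" and ef: "e \<noteq> f"
    obtain x where x: "x < N" "e = {x, p x}" using e unfolding Mof_def by auto
    obtain y where y: "y < N" "f = {y, p y}" using f unfolding Mof_def by auto
    have px: "p (p x) = x" and py: "p (p y) = y" using FI_D[OF FI x(1)] FI_D[OF FI y(1)] by auto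
    show "e \<inter> f = {}"
    proof (rule ccontr)
      assume "e \<inter> f \<noteq> {}"
      then obtain z where "z \<in> e" "z \<in> f" by auto
      then have "z = x \<or> z = p x" "z = y \<or> z = p y" using x y by auto
      then have "{z, p z} = e" "{z, p z} = f" using x(2) y(2) px py by (metis insert_commute)+
      with ef show False by simp
    qed
  qed
  show "\<forall>v\<in>{0..<N}. \<exists>e\<in>Mof N p. v \<in> e" unfolding Mof_def by auto
qed

lemma Mof_sum:
  fixes g :: "nat set \<Rightarrow> int"
  assumes FI: "FI N p"
  shows "(\<Sum>x<N. g {x, p x}) = 2 * (\<Sum>e\<in>Mof N p. g e)"
proof (rule two_to_one)
  show "finite (Mof N p)" unfolding Mof_def by simp
  show "(\<lambda>x. {x, p x}) ` {..<N} \<subseteq> Mof N p" unfolding Mof_def by simp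
  fix t assume "t \<in> Mof N p"
  then obtain a where a: "a < N" "t = {a, p a}" unfolding Mof_def by auto
  have pa: "p a < N" "p a \<noteq> a" "p (p a) = a" using FI_D[OF FI a(1)] by auto
  have "{x \<in> {..<N}. {x, p x} = t} = {a, p a}"
  proof (intro equalityI subsetI)
    fix x assume "x \<in> {x \<in> {..<N}. {x, p x} = t}"
    then show "x \<in> {a, p a}" using a by auto
  next
    fix x assume "x \<in> {a, p a}"
    then show "x \<in> {x \<in> {..<N}. {x, p x} = t}" using a pa by auto
  qed
  then show "card {x \<in> {..<N}. {x, p x} = t} = 2" using pa by simp
qed simp

lemma score_card: "score \<sigma> N p = card (Wset \<sigma> N p)"
proof -
  have "Wset \<sigma> N p = {x\<in>{..<N}. A \<sigma> x (p x)}" unfolding Wset_def by auto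
  then show ?thesis unfolding score_def by (simp add: sum.inter_filter[symmetric])
qed

lemma score_int: "int (score \<sigma> N p) = (\<Sum>x<N. of_bool (A \<sigma> x (p x)))"
  unfolding score_def of_nat_sum by (rule sum.cong) auto

lemma score_le: "score \<sigma> N p \<le> N"
proof -
  have "score \<sigma> N p \<le> (\<Sum>x<N. 1)" unfolding score_def by (rule sum_mono) simp
  then show ?thesis by simp
qed

lemma score_even:
  assumes FI: "FI N p"
  shows "even (score \<sigma> N p)"
proof -
  have "(\<Sum>x<N. of_bool (A \<sigma> x (p x)) :: int) = (\<Sum>x<N. of_bool (\<sigma> {x, p x} = -1))"
  proof (rule sum.cong[OF refl])
    fix x assume "x \<in> {..<N}"
    then have "p x \<noteq> x" using FI_D[OF FI] by auto
    then show "of_bool (A \<sigma> x (p x)) = (of_bool (\<sigma> {x, p x} = -1) :: int)" unfolding A_def by auto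
  qed
  also have "\<dots> = 2 * (\<Sum>e\<in>Mof N p. of_bool (\<sigma> e = -1))"
    by (rule Mof_sum[OF FI, of "\<lambda>e. of_bool (\<sigma> e = -1)"])
  finally have "int (score \<sigma> N p) = 2 * (\<Sum>e\<in>Mof N p. of_bool (\<sigma> e = -1))"
    unfolding score_int by simp
  then have "even (int (score \<sigma> N p))" by simp
  then show ?thesis by simp
qed

lemma Mof_sigma:
  assumes FI: "FI N p" and pm: "\<forall>e\<in>complete_edges N. \<sigma> e \<in> {-1, 1}"
  shows "2 * (\<Sum>e\<in>Mof N p. \<sigma> e) = int N - 2 * int (score \<sigma> N p)"
proof -
  have "(\<Sum>x<N. \<sigma> {x, p x}) = (\<Sum>x<N. 1 - 2 * of_bool (A \<sigma> x (p x)))"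
  proof (rule sum.cong[OF refl])
    fix x assume x: "x \<in> {..<N}"
    have px: "p x < N" "p x \<noteq> x" using FI_D[OF FI] x by auto
    then have "{x, p x} \<in> complete_edges N" using x unfolding complete_edges_def by auto
    then have "\<sigma> {x, p x} \<in> {-1,1}" using pm by auto
    then show "\<sigma> {x, p x} = 1 - 2 * of_bool (A \<sigma> x (p x))" using px unfolding A_def by auto
  qed
  also have "\<dots> = int N - 2 * int (score \<sigma> N p)"
    unfolding score_int by (simp add: sum_subtractf sum_distrib_left del: sum_of_bool_eq)
  finally show ?thesis using Mof_sum[OF FI, of \<sigma>] by simp
qed

lemma score_neg:
  assumes FI: "FI N p" and pm: "\<forall>e\<in>complete_edges N. \<sigma> e \<in> {-1, 1}"
  shows "score \<sigma> N p + score (\<lambda>e. - \<sigma> e) N p = N"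
proof -
  have "score \<sigma> N p + score (\<lambda>e. - \<sigma> e) N p = (\<Sum>x<N. (1::nat))"
    unfolding score_def sum.distrib[symmetric]
  proof (rule sum.cong[OF refl])
    fix x assume x: "x \<in> {..<N}"
    have px: "p x < N" "p x \<noteq> x" using FI_D[OF FI] x by auto
    then have "{x, p x} \<in> complete_edges N" using x unfolding complete_edges_def by auto
    then have "\<sigma> {x, p x} \<in> {-1,1}" using pm by auto
    then show "(if A \<sigma> x (p x) then 1 else 0) + (if A (\<lambda>e. - \<sigma> e) x (p x) then 1 else 0) = (1::nat)"
      using px unfolding A_def by auto
  qed
  then show ?thesis by simp
qed


lemma Core:
  assumes FI: "FI (4*n) p" and OPT: "Opt \<sigma> (4*n) p" and k: "k \<ge> 2"
    and pm: "\<forall>e\<in>complete_edges (4*n). \<sigma> e \<in> {-1, 1}"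
    and sc: "int (score \<sigma> (4*n) p) \<le> 2 * (int n - int k)"
  shows "(\<Sum>e\<in>complete_edges (4*n). \<sigma> e) \<ge> int n * (int n - 1) + int k * (6 * int n - 1) + int k ^ 2"
proof -
  define w where "w = int (card (Wset \<sigma> (4*n) p))"
  define u where "u = int (card (Uset \<sigma> (4*n) p))"
  define D where "D = (\<Sum>x<4*n. \<Sum>y<4*n. of_bool (A \<sigma> x y) :: int)"
  define E where "E = (\<Sum>e\<in>complete_edges (4*n). \<sigma> e)"
  have wu: "w + u = 4 * int n" using cardWU[OF FI OPT] unfolding w_def u_def by simp
  have ww: "w \<le> 2 * (int n - int k)" using sc unfolding w_def score_card by simp
  have w0: "w \<ge> 0" unfolding w_def by simp
  have hyp: "2 * int (card (Wset \<sigma> (4*n) p)) + 6 \<le> 4 * int (card (Uset \<sigma> (4*n) p))"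
  proof -
    have "int k \<ge> 2" using k by simp
    then show ?thesis using wu ww w0 unfolding w_def[symmetric] u_def[symmetric] by (smt (verit))
  qed
  have cb: "4 * D \<le> 4 * w * (4 * int n) - 2 * w - w^2"
    using count_bound[OF FI OPT hyp] unfolding D_def w_def by simp
  have sE: "2 * E = 4 * int n * (4 * int n - 1) - 2 * D"
    using sigmaE[OF pm] unfolding E_def D_def by simp
  define m where "m = int n - int k"
  have m0: "2 * m - w \<ge> 0" using ww unfolding m_def by simp
  have m1: "16 * int n - 2 - 2 * m - w \<ge> 0" using ww k w0 unfolding m_def by simp
  have prod: "(2 * m - w) * (16 * int n - 2 - 2 * m - w) \<ge> 0" using m0 m1 by simp
  have "4 * E \<ge> 4 * (int n * (int n - 1) + int k * (6 * int n - 1) + int k ^ 2)"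
    using prod cb sE unfolding m_def by (simp add: algebra_simps power2_eq_square)
  then show ?thesis unfolding E_def by simp
qed


lemma FI_exists: "\<exists>p. FI (4*n) p"
proof -
  define f where "f = (\<lambda>x::nat. if x < 4*n then (if even x then x+1 else x-1) else x)"
  have "f x < 4*n \<and> f x \<noteq> x \<and> f (f x) = x" if x: "x < 4*n" for x
  proof (cases "even x")
    case True
    then have "x + 1 < 4*n" using x by presburger
    then show ?thesis using True x by (simp add: f_def)
  next
    case False
    then have "x \<ge> 1" by presburger
    then show ?thesis using False x by (simp add: f_def, linarith)
  qed
  then show ?thesis unfolding FI_def by blast
qed

theorem theorem3:
  fixes n k :: nat and \<sigma> :: "nat set \<Rightarrow> int"
  assumes "n \<ge> 1" and "k \<ge> 2"
    and "\<forall>e\<in>complete_edges (4*n). \<sigma> e \<in> {-1, 1}"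
    and "\<bar>\<Sum>e\<in>complete_edges (4*n). \<sigma> e\<bar>
           < int n * (int n - 1) + int k * (6 * int n - 1) + int k ^ 2"
  shows "\<exists>M. perfect_matching (4*n) M \<and> \<bar>\<Sum>e\<in>M. \<sigma> e\<bar> \<le> 2 * int k - 2"
proof -
  define \<sigma>' where "\<sigma>' = (\<lambda>e. - \<sigma> e)"
  have pm: "\<forall>e\<in>complete_edges (4*n). \<sigma> e \<in> {-1, 1}" by (rule assms(3))
  have pm': "\<forall>e\<in>complete_edges (4*n). \<sigma>' e \<in> {-1, 1}" using pm unfolding \<sigma>'_def by auto
  have bnd: "\<forall>y. FI (4*n) y \<longrightarrow> score s (4*n) y < 4*n+1" for s
    using score_le by (simp add: le_imp_less_Suc)
  obtain p0 where p0: "FI (4*n) p0" using FI_exists by blast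
  obtain p1 where p1: "FI (4*n) p1" "\<forall>y. FI (4*n) y \<longrightarrow> score \<sigma>' (4*n) y \<le> score \<sigma>' (4*n) p1"
    using Lattices_Big.ex_has_greatest_nat[of "FI (4*n)", OF p0 bnd] by blast
  have opt1: "Opt \<sigma>' (4*n) p1" using p1 unfolding Opt_def by blast
  have sneg: "(\<Sum>e\<in>complete_edges (4*n). \<sigma>' e) = - (\<Sum>e\<in>complete_edges (4*n). \<sigma> e)"
    unfolding \<sigma>'_def by (simp add: sum_negf)
  have s1: "int (score \<sigma>' (4*n) p1) > 2 * (int n - int k)"
  proof (rule ccontr)
    assume "\<not> ?thesis"
    then have "int (score \<sigma>' (4*n) p1) \<le> 2 * (int n - int k)" by simp
    from Core[OF p1(1) opt1 assms(2) pm' this] sneg assms(4) show False by simp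
  qed
  have s1b: "score \<sigma> (4*n) p1 + score \<sigma>' (4*n) p1 = 4*n"
    using score_neg[OF p1(1) pm] unfolding \<sigma>'_def .
  define Q where "Q = (\<lambda>q. FI (4*n) q \<and> int (score \<sigma> (4*n) q) \<le> 2 * int n + 2 * int k - 1)"
  have Qp1: "Q p1" unfolding Q_def using p1(1) s1 s1b by simp
  have bndQ: "\<forall>y. Q y \<longrightarrow> score \<sigma> (4*n) y < 4*n+1" using bnd unfolding Q_def by blast
  obtain p2 where p2: "Q p2" "\<forall>y. Q y \<longrightarrow> score \<sigma> (4*n) y \<le> score \<sigma> (4*n) p2"
    using Lattices_Big.ex_has_greatest_nat[of Q, OF Qp1 bndQ] by blast
  have FI2: "FI (4*n) p2" using p2(1) unfolding Q_def by simp
  have s2: "int (score \<sigma> (4*n) p2) > 2 * (int n - int k)"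
  proof (rule ccontr)
    assume "\<not> ?thesis"
    then have le: "int (score \<sigma> (4*n) p2) \<le> 2 * (int n - int k)" by simp
    have "Opt \<sigma> (4*n) p2" unfolding Opt_def
    proof (intro allI impI)
      fix q assume q: "FI (4*n) q" "score \<sigma> (4*n) q \<le> score \<sigma> (4*n) p2 + 4"
      have "int k \<ge> 2" using assms(2) by simp
      then have "Q q" unfolding Q_def using q le by simp
      then show "score \<sigma> (4*n) q \<le> score \<sigma> (4*n) p2" using p2(2) by blast
    qed
    from Core[OF FI2 this assms(2) pm le] assms(4) show False by simp
  qed
  have s3: "int (score \<sigma> (4*n) p2) \<le> 2 * int n + 2 * int k - 1" using p2(1) unfolding Q_def by simp
  obtain j where j: "score \<sigma> (4*n) p2 = 2 * j" using score_even[OF FI2] by blast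
  have sM: "2 * (\<Sum>e\<in>Mof (4*n) p2. \<sigma> e) = int (4*n) - 2 * int (score \<sigma> (4*n) p2)"
    by (rule Mof_sigma[OF FI2 pm])
  have "\<bar>\<Sum>e\<in>Mof (4*n) p2. \<sigma> e\<bar> \<le> 2 * int k - 2"
  proof -
    have a: "int j \<ge> int n - int k + 1" "int j \<le> int n + int k - 1" using s2 s3 unfolding j by simp_all
    have "2 * (\<Sum>e\<in>Mof (4*n) p2. \<sigma> e) = 4 * int n - 4 * int j" using sM unfolding j by simp
    with a show ?thesis by (smt (verit))
  qed
  then show ?thesis using Mof_pm[OF FI2] by blast
qed

end
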